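(* For every real Banach space $X$ with $\dim X\ge 2$ and all $\alpha,\beta>0$, $$DW(X,\alpha,\beta)\ge(\alpha+\beta)\max\{\varepsilon_0(X),1\}.$$
   Context: For $\alpha,\beta>0$, $$DW(X,\alpha,\beta)=\sup\left\{\frac{\alpha\|x\|+\beta\|y\|}{\|x-y\|}\left\|\frac{x}{\|x\|}-\frac{y}{\|y\|}\right\|: x,y\in X\setminus\{0\},\ x\neq y\right\}.$$ The modulus of convexity is $\delta_X(\varepsilon)=\inf\{1-\|\tfrac12(x+y)\|: x,y\in S_X,\ \|x-y\|\ge\varepsilon\}$ for $\varepsilon\in[0,2]$, where $S_X$ is the unit sphere, and the characteristic of convexity is $\varepsilon_0(X)=\sup\{\varepsilon\in[0,2]:\delta_X(\varepsilon)=0\}$. *)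

theory Defs
  imports "HOL-Analysis.Analysis"
begin

definition DW :: "'a::real_normed_vector itself \<Rightarrow> real \<Rightarrow> real \<Rightarrow> real" where
  "DW X \<alpha> \<beta> = Sup {(\<alpha> * norm x + \<beta> * norm y) / norm (x - y) *
       norm (x /\<^sub>R norm x - y /\<^sub>R norm y) | x y :: 'a. x \<noteq> 0 \<and> y \<noteq> 0 \<and> x \<noteq> y}"

definition modulus_convexity :: "'a::real_normed_vector itself \<Rightarrow> real \<Rightarrow> real" where
  "modulus_convexity X \<epsilon> = Inf {1 - norm ((1/2) *\<^sub>R (x + y)) | x y :: 'a.
       norm x = 1 \<and> norm y = 1 \<and> norm (x - y) \<ge> \<epsilon>}"

definition char_convexity :: "'a::real_normed_vector itself \<Rightarrow> real" where
  "char_convexity X = Sup {\<epsilon>. 0 \<le> \<epsilon> \<and> \<epsilon> \<le> 2 \<and> modulus_convexity X \<epsilon> = 0}"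

end

theory Submission
  imports Defs
begin

lemma half_bound:
  fixes x y :: "'a::real_normed_vector"
  assumes "x \<noteq> 0" "y \<noteq> 0"
  shows "norm x * norm (x /\<^sub>R norm x - y /\<^sub>R norm y) \<le> 2 * norm (x - y)"
proof -
  have nx: "norm x > 0" "norm y > 0" using assms by auto
  have "norm x * norm (x /\<^sub>R norm x - y /\<^sub>R norm y) = norm (norm x *\<^sub>R (x /\<^sub>R norm x - y /\<^sub>R norm y))"
    using nx by simp
  also have "norm x *\<^sub>R (x /\<^sub>R norm x - y /\<^sub>R norm y) = (x - y) + (1 - norm x / norm y) *\<^sub>R y"
    using nx by (simp add: algebra_simps divide_inverse)
  also have "norm ((x - y) + (1 - norm x / norm y) *\<^sub>R y) \<le> norm (x - y) + norm ((1 - norm x / norm y) *\<^sub>R y)"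
    by (rule norm_triangle_ineq)
  also have "norm ((1 - norm x / norm y) *\<^sub>R y) = \<bar>(1 - norm x / norm y) * norm y\<bar>"
    by (simp add: abs_mult)
  also have "(1 - norm x / norm y) * norm y = norm y - norm x" using nx by (simp add: field_simps)
  also have "\<bar>norm y - norm x\<bar> \<le> norm (x - y)"
    using norm_triangle_ineq3[of y x] by (simp add: norm_minus_commute)
  finally show ?thesis by simp
qed

lemma ratio_bound:
  fixes x y :: "'a::real_normed_vector"
  assumes "x \<noteq> 0" "y \<noteq> 0" "x \<noteq> y" "\<alpha> \<ge> 0" "\<beta> \<ge> 0"
  shows "(\<alpha> * norm x + \<beta> * norm y) / norm (x - y) * norm (x /\<^sub>R norm x - y /\<^sub>R norm y) \<le> 2 * (\<alpha> + \<beta>)"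
proof -
  let ?N = "norm (x /\<^sub>R norm x - y /\<^sub>R norm y)"
  have nx: "norm (x - y) > 0" using assms by auto
  have h1: "norm x * ?N \<le> 2 * norm (x - y)" using half_bound assms by blast
  have h2: "norm y * ?N \<le> 2 * norm (x - y)" using half_bound[of y x] assms
    by (simp add: norm_minus_commute)
  have "(\<alpha> * norm x + \<beta> * norm y) * ?N = \<alpha> * (norm x * ?N) + \<beta> * (norm y * ?N)"
    by (simp add: algebra_simps)
  also have "\<dots> \<le> \<alpha> * (2 * norm (x - y)) + \<beta> * (2 * norm (x - y))"
    using h1 h2 assms(4,5) by (intro add_mono mult_left_mono) auto
  finally have "(\<alpha> * norm x + \<beta> * norm y) * ?N \<le> 2 * (\<alpha> + \<beta>) * norm (x - y)"
    by (simp add: algebra_simps)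
  thus ?thesis using nx by (simp add: field_simps)
qed

lemma DW_upper:
  fixes x y :: "'a::real_normed_vector"
  assumes "x \<noteq> 0" "y \<noteq> 0" "x \<noteq> y" "\<alpha> \<ge> 0" "\<beta> \<ge> 0"
  shows "(\<alpha> * norm x + \<beta> * norm y) / norm (x - y) * norm (x /\<^sub>R norm x - y /\<^sub>R norm y) \<le> DW TYPE('a) \<alpha> \<beta>"
  unfolding DW_def
proof (rule cSup_upper)
  show "(\<alpha> * norm x + \<beta> * norm y) / norm (x - y) * norm (x /\<^sub>R norm x - y /\<^sub>R norm y)
    \<in> {(\<alpha> * norm x + \<beta> * norm y) / norm (x - y) * norm (x /\<^sub>R norm x - y /\<^sub>R norm y) | x y :: 'a. x \<noteq> 0 \<and> y \<noteq> 0 \<and> x \<noteq> y}"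
    using assms by blast
  show "bdd_above {(\<alpha> * norm x + \<beta> * norm y) / norm (x - y) * norm (x /\<^sub>R norm x - y /\<^sub>R norm y) | x y :: 'a. x \<noteq> 0 \<and> y \<noteq> 0 \<and> x \<noteq> y}"
    unfolding bdd_above_def using ratio_bound assms(4,5) by blast
qed

lemma DW_ge1:
  fixes e :: "'a::real_normed_vector"
  assumes "e \<noteq> 0" "\<alpha> \<ge> 0" "\<beta> \<ge> 0"
  shows "\<alpha> + \<beta> \<le> DW TYPE('a) \<alpha> \<beta>"
proof -
  have ne: "norm e > 0" using assms by auto
  have "e \<noteq> - e" using assms by (metis add.inverse_neutral minus_equation_iff neg_equal_iff_equal equation_minus_iff
      add_eq_0_iff2 scaleR_2 scaleR_eq_0_iff zero_neq_numeral one_add_one)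
  hence "(\<alpha> * norm e + \<beta> * norm (- e)) / norm (e - (- e)) * norm (e /\<^sub>R norm e - (- e) /\<^sub>R norm (- e)) \<le> DW TYPE('a) \<alpha> \<beta>"
    using DW_upper assms by (metis neg_equal_0_iff_equal)
  moreover have "e - (- e) = 2 *\<^sub>R e" by (simp add: scaleR_2)
  moreover have "e /\<^sub>R norm e - (- e) /\<^sub>R norm (- e) = 2 *\<^sub>R (e /\<^sub>R norm e)" by (simp only: norm_minus_cancel scaleR_minus_right diff_minus_eq_add scaleR_2)
  ultimately have "\<alpha> * (norm e * 2) + \<beta> * (norm e * 2) \<le> norm e * (2 * DW TYPE('a) \<alpha> \<beta>)"
    using ne by (simp add: field_simps)
  hence "(\<alpha> + \<beta>) * (2 * norm e) \<le> DW TYPE('a) \<alpha> \<beta> * (2 * norm e)" by (simp add: algebra_simps)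
  thus ?thesis using ne by (meson mult_right_le_imp_le zero_less_mult_iff zero_less_numeral)
qed

lemma key:
  fixes x y :: "'a::real_normed_vector"
  assumes nx: "norm x = 1" and ny: "norm y = 1" and d: "norm (x - y) \<ge> \<epsilon>"
    and near: "1 - norm ((1/2) *\<^sub>R (x + y)) < t^2"
    and t0: "0 < t" and t1: "t \<le> 1/2" and a: "\<alpha> \<ge> 0" and b: "\<beta> \<ge> 0" and e2: "\<epsilon> \<le> 2"
  shows "(\<alpha> + \<beta>) * (\<epsilon> - 6 * t) \<le> DW TYPE('a) \<alpha> \<beta>"
proof -
  define u where "u = (1 - t) *\<^sub>R x + t *\<^sub>R y"
  define v where "v = (1 - t) *\<^sub>R x"
  let ?w = "(1/2) *\<^sub>R (x + y)"
  have nv: "norm v = 1 - t" using nx t1 by (simp add: v_def)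
  have weq: "(2 * (1 - t)) *\<^sub>R ?w = u + (1 - 2 * t) *\<^sub>R y"
    by (simp add: u_def algebra_simps) (metis mult_2_right scaleR_left_distrib mult.commute)
  have "norm ((2 * (1 - t)) *\<^sub>R ?w) = 2 * (1 - t) * norm ?w" using t1 by simp
  moreover have "norm (u + (1 - 2 * t) *\<^sub>R y) \<le> norm u + (1 - 2 * t)"
    using norm_triangle_ineq[of u "(1 - 2 * t) *\<^sub>R y"] ny t1 by simp
  moreover have "norm ((2 * (1 - t)) *\<^sub>R ?w) = norm (u + (1 - 2 * t) *\<^sub>R y)" by (simp only: weq)
  ultimately have A: "2 * (1 - t) * norm ?w \<le> norm u + (1 - 2 * t)" by linarith
  have B: "2 * (1 - t) * (1 - t^2) \<le> 2 * (1 - t) * norm ?w"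
    using near t1 by (intro mult_left_mono) auto
  have "2 * (1 - t) * (1 - t^2) = 1 - 2 * t + (1 - 2 * t^2 + 2 * t^3)"
    by (simp add: algebra_simps power2_eq_square power3_eq_cube)
  hence nu_lo: "norm u \<ge> 1 - 2 * t^2" using A B t0 by (smt (verit) zero_le_power)
  have nu_hi: "norm u \<le> 1"
  proof -
    have "norm u \<le> norm ((1 - t) *\<^sub>R x) + norm (t *\<^sub>R y)" unfolding u_def by (rule norm_triangle_ineq)
    thus ?thesis using nx ny t0 t1 by simp
  qed
  have t2: "t^2 \<le> t / 2" using t0 t1 by (simp add: power2_eq_square mult_right_mono)
  have nu_pos: "norm u > 0" using nu_lo t2 t1 by linarith
  have uv: "u - v = t *\<^sub>R y" by (simp add: u_def v_def)
  have nuv: "norm (u - v) = t" using uv ny t0 by simp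
  have vx: "v /\<^sub>R norm v = x" using nv t1 by (simp add: v_def)
  let ?N = "norm (u /\<^sub>R norm u - v /\<^sub>R norm v)"
  have "u - x = (u /\<^sub>R norm u - x) + (u - u /\<^sub>R norm u)" by simp
  hence "norm (u - x) \<le> norm (u /\<^sub>R norm u - x) + norm (u - u /\<^sub>R norm u)"
    by (metis norm_triangle_ineq)
  moreover have "u - x = t *\<^sub>R (y - x)" by (simp add: u_def algebra_simps)
  hence "norm (u - x) = t * norm (x - y)" using t0 by (simp add: norm_minus_commute)
  moreover have "norm (u - u /\<^sub>R norm u) = 1 - norm u"
  proof -
    have "u - u /\<^sub>R norm u = (1 - 1 / norm u) *\<^sub>R u" by (simp add: algebra_simps divide_inverse)
    hence "norm (u - u /\<^sub>R norm u) = \<bar>(1 - 1 / norm u) * norm u\<bar>" by (simp add: abs_mult)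
    also have "(1 - 1 / norm u) * norm u = norm u - 1" using nu_pos by (simp add: field_simps)
    finally show ?thesis using nu_hi by simp
  qed
  moreover have "t * \<epsilon> \<le> t * norm (x - y)" using d t0 by simp
  ultimately have Nlo: "?N \<ge> t * \<epsilon> - 2 * t^2" using vx nu_lo by simp
  have val: "(\<alpha> * norm u + \<beta> * norm v) / norm (u - v) * ?N \<le> DW TYPE('a) \<alpha> \<beta>"
  proof (rule DW_upper)
    show "u \<noteq> 0" using nu_pos by auto
    show "v \<noteq> 0" using nv t1 by auto
    show "u \<noteq> v" using nuv t0 by auto
  qed (use a b in auto)
  have coef: "\<alpha> * norm u + \<beta> * norm v \<ge> (\<alpha> + \<beta>) * (1 - 2 * t)"
  proof -
    have "norm u \<ge> 1 - 2 * t" using nu_lo t2 t0 by linarith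
    hence "\<alpha> * norm u \<ge> \<alpha> * (1 - 2 * t)" using a by (simp add: mult_left_mono)
    moreover have "\<beta> * norm v \<ge> \<beta> * (1 - 2 * t)" using b nv t0 by (simp add: mult_left_mono)
    ultimately show ?thesis by (simp add: algebra_simps)
  qed
  show ?thesis
  proof (cases "\<epsilon> - 2 * t \<le> 0")
    case True
    have "(\<alpha> + \<beta>) * (\<epsilon> - 6 * t) \<le> 0" using True a b t0 by (simp add: mult_nonneg_nonpos)
    also have "0 \<le> (\<alpha> * norm u + \<beta> * norm v) / norm (u - v) * ?N" using a b by simp
    finally show ?thesis using val by linarith
  next
    case False
    have q: "?N / t \<ge> \<epsilon> - 2 * t" using Nlo t0 by (simp add: field_simps power2_eq_square)
    have "(\<alpha> * norm u + \<beta> * norm v) / norm (u - v) * ?N = (\<alpha> * norm u + \<beta> * norm v) * (?N / t)"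
      using nuv by simp
    also have "\<dots> \<ge> (\<alpha> + \<beta>) * (1 - 2 * t) * (\<epsilon> - 2 * t)"
      using coef q False a b t1 by (intro mult_mono) auto
    finally have "(\<alpha> + \<beta>) * (1 - 2 * t) * (\<epsilon> - 2 * t) \<le> DW TYPE('a) \<alpha> \<beta>" using val by linarith
    moreover have "(\<alpha> + \<beta>) * (\<epsilon> - 6 * t) \<le> (\<alpha> + \<beta>) * (1 - 2 * t) * (\<epsilon> - 2 * t)"
    proof -
      have "\<epsilon> - 6 * t \<le> (1 - 2 * t) * (\<epsilon> - 2 * t)"
      proof -
        have "t * \<epsilon> \<le> t * 2" using e2 t0 by simp
        moreover have "0 \<le> t * t" by simp
        moreover have "(1 - 2 * t) * (\<epsilon> - 2 * t) = \<epsilon> - 2 * t - 2 * (t * \<epsilon>) + 4 * (t * t)"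
          by (simp add: algebra_simps)
        ultimately show ?thesis by linarith
      qed
      thus ?thesis using a b by (simp add: mult_left_mono mult.assoc)
    qed
    ultimately show ?thesis by linarith
  qed
qed

lemma eps_le:
  fixes x0 :: "'a::real_normed_vector"
  assumes x0: "norm x0 = 1" and m: "modulus_convexity TYPE('a) \<epsilon> = 0"
    and e0: "0 \<le> \<epsilon>" and e2: "\<epsilon> \<le> 2" and a: "\<alpha> > 0" and b: "\<beta> > 0"
  shows "(\<alpha> + \<beta>) * \<epsilon> \<le> DW TYPE('a) \<alpha> \<beta>"
proof (rule field_le_epsilon)
  fix \<gamma> :: real assume g: "0 < \<gamma>"
  define t where "t = min (1/2) (\<gamma> / (6 * (\<alpha> + \<beta>)))"
  have t0: "0 < t" using g a b by (auto simp: t_def)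
  have t1: "t \<le> 1/2" unfolding t_def by (rule min.cobounded1)
  have t3: "6 * (\<alpha> + \<beta>) * t \<le> \<gamma>"
  proof -
    have "t \<le> \<gamma> / (6 * (\<alpha> + \<beta>))" by (simp add: t_def)
    thus ?thesis using a b by (simp add: field_simps)
  qed
  let ?S = "{1 - norm ((1/2) *\<^sub>R (x + y)) | x y :: 'a. norm x = 1 \<and> norm y = 1 \<and> norm (x - y) \<ge> \<epsilon>}"
  have "1 - norm ((1/2) *\<^sub>R (x0 + (- x0))) \<in> ?S"
  proof -
    have "norm (x0 - (- x0)) = 2" using x0 by (simp add: scaleR_2[symmetric])
    thus ?thesis using x0 e2 by (intro CollectI exI[of _ x0] exI[of _ "- x0"]) auto
  qed
  hence ne: "?S \<noteq> {}" by blast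
  have "Inf ?S < t^2" using m t0 unfolding modulus_convexity_def by simp
  then obtain z where "z \<in> ?S" "z < t^2" using cInf_lessD[OF ne] by blast
  then obtain x y :: 'a where xy: "norm x = 1" "norm y = 1" "norm (x - y) \<ge> \<epsilon>"
    "1 - norm ((1/2) *\<^sub>R (x + y)) < t^2" by blast
  have "(\<alpha> + \<beta>) * (\<epsilon> - 6 * t) \<le> DW TYPE('a) \<alpha> \<beta>"
    using key[OF xy t0 t1 _ _ e2] a b by simp
  thus "(\<alpha> + \<beta>) * \<epsilon> \<le> DW TYPE('a) \<alpha> \<beta> + \<gamma>" using t3 by (simp add: algebra_simps)
qed

lemma mod0:
  fixes x0 :: "'a::real_normed_vector"
  assumes x0: "norm x0 = 1"
  shows "modulus_convexity TYPE('a) 0 = 0"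
  unfolding modulus_convexity_def
proof (rule cInf_eq_minimum)
  have "1 - norm ((1/2) *\<^sub>R (x0 + x0)) = 0" using x0 by (simp add: scaleR_2[symmetric])
  thus "0 \<in> {1 - norm ((1/2) *\<^sub>R (x + y)) | x y :: 'a. norm x = 1 \<and> norm y = 1 \<and> norm (x - y) \<ge> 0}"
    using x0 by (intro CollectI exI[of _ x0] exI[of _ x0]) auto
next
  fix z assume "z \<in> {1 - norm ((1/2) *\<^sub>R (x + y)) | x y :: 'a. norm x = 1 \<and> norm y = 1 \<and> norm (x - y) \<ge> 0}"
  then obtain x y :: 'a where xy: "norm x = 1" "norm y = 1" "z = 1 - norm ((1/2) *\<^sub>R (x + y))" by blast
  have "norm (x + y) \<le> 2" using norm_triangle_ineq[of x y] xy by simp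
  thus "0 \<le> z" using xy by simp
qed

theorem theorem1:
  fixes \<alpha> \<beta> :: real
  assumes dim2: "\<exists>u v :: 'a::banach. \<forall>a b :: real. a *\<^sub>R u + b *\<^sub>R v = 0 \<longrightarrow> a = 0 \<and> b = 0"
    and "\<alpha> > 0" and "\<beta> > 0"
  shows "DW TYPE('a) \<alpha> \<beta> \<ge> (\<alpha> + \<beta>) * max (char_convexity TYPE('a)) 1"
proof -
  obtain u v :: 'a where uv: "\<forall>a b :: real. a *\<^sub>R u + b *\<^sub>R v = 0 \<longrightarrow> a = 0 \<and> b = 0"
    using dim2 by blast
  have u0: "u \<noteq> 0" using uv[rule_format, of 1 0] by auto
  define x0 where "x0 = u /\<^sub>R norm u"
  have x0: "norm x0 = 1" using u0 by (simp add: x0_def)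
  have ab: "\<alpha> + \<beta> > 0" using assms by simp
  have g1: "\<alpha> + \<beta> \<le> DW TYPE('a) \<alpha> \<beta>" using DW_ge1[OF u0] assms by simp
  let ?E = "{\<epsilon>. 0 \<le> \<epsilon> \<and> \<epsilon> \<le> 2 \<and> modulus_convexity TYPE('a) \<epsilon> = 0}"
  have "0 \<in> ?E" using mod0[OF x0] by simp
  hence neE: "?E \<noteq> {}" by blast
  have "char_convexity TYPE('a) \<le> DW TYPE('a) \<alpha> \<beta> / (\<alpha> + \<beta>)"
    unfolding char_convexity_def
  proof (rule cSup_least[OF neE])
    fix \<epsilon> assume "\<epsilon> \<in> ?E"
    hence "(\<alpha> + \<beta>) * \<epsilon> \<le> DW TYPE('a) \<alpha> \<beta>" using eps_le[OF x0] assms by blast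
    thus "\<epsilon> \<le> DW TYPE('a) \<alpha> \<beta> / (\<alpha> + \<beta>)" using ab by (simp add: field_simps)
  qed
  hence "(\<alpha> + \<beta>) * char_convexity TYPE('a) \<le> DW TYPE('a) \<alpha> \<beta>" using ab by (simp add: field_simps)
  thus ?thesis using g1 by (simp add: max_def)
qed

end
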